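(* Consider the all-batch change model described in the context, and suppose that for every batch $e\in\{1,\dots,E\}$ the post-change parameter set $\Lambda^{e}=\{\lambda:|\lambda-\theta^{(e)}|\ge\epsilon\}$ is finite (where $\epsilon>0$ is fixed). Then the stopping time $\tau_a=\inf\{n\ge1:W_n>A\}$ is asymptotically efficient. That is, there exist thresholds $A=A_\beta=O(\log\beta)$ such that, as $\beta\to\infty$, \[ \mathbb{E}_\infty[\tau_a]\ge\beta(1+o(1)), \] and there is a constant $C>0$ with \[ \mathbb{E}_1[\tau_a]\le C\log\beta\,(1+o(1)), \] whenever the change affects all batches with post-change parameters $\lambda^{(e)}\in\Lambda^e$, $e=1,\dots,E$.
   Context: Let $\{p(\cdot;\theta):\theta\in\Theta\subseteq\mathbb{R}\}$ be a parametric family of probability densities with respect to a common dominating measure. Assume that for any two distinct parameters the Kullback–Leibler divergence between the corresponding densities is finite and strictly positive. **Period and batches.** Fix a period $T\in\mathbb{N}$ and integers $0=N_0<N_1<\dots<N_E=T$. The batches are $B_e=\{N_{e-1}+1,\dots,N_e\}$ for $e=1,\dots,E$, which partition $\{1,\dots,T\}$. For $k\in\mathbb{N}$, the batch of $k$, written $b(k)$, is the unique $j$ with $r(k)\in B_j$. Here $r(k)\in\{1,\dots,T\}$ is the residue of $k$ modulo $T$, with residue $0$ identified with $T$. There are baseline (pre-change) parameters $\theta^{(1)},\dots,\theta^{(E)}$. **Pre-change model.** Under the no-change measure $\mathbb{P}_\infty$, the observations $Y_1,Y_2,\dots$ are independent with $Y_k\sim p(\cdot;\theta^{(b(k))})$.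 **All-batch change model.** For a change time $\gamma\in\mathbb{N}$ and post-change parameters $\lambda^{(1)},\dots,\lambda^{(E)}$ with $\lambda^{(e)}\ne\theta^{(e)}$, the measure $\mathbb{P}_\gamma$ makes the $Y_k$ independent with the following laws: - $Y_k\sim p(\cdot;\theta^{(b(k))})$ for $k<\gamma$; - $Y_k\sim p(\cdot;\lambda^{(b(k))})$ for $k\ge\gamma$. $\mathbb{E}_\gamma$ denotes expectation under $\mathbb{P}_\gamma$. **Statistic and stopping rule.** For $\epsilon>0$ let $\Lambda^e=\{\lambda:|\lambda-\theta^{(e)}|\ge\epsilon\}$. Define \[ W_n=\max_{1\le k\le n}\ \sup_{\lambda^{(e)}\in\Lambda^{e},\ e=1,\dots,E}\ \sum_{i=k}^{n}\log\frac{p(Y_i;\lambda^{(b(i))})}{p(Y_i;\theta^{(b(i))})}, \] and $\tau_a=\inf\{n\ge1:W_n>A\}$ for a threshold $A>0$. **Asymptotic efficiency.** A family of stopping times $\tau$ indexed by a false-alarm parameter $\beta$ is called asymptotically efficient if, as $\beta\to\infty$, $\mathbb{E}_\infty[\tau]\ge\beta(1+o(1))$, and there exists a constant $C>0$ with $\mathbb{E}_1[\tau]\le C\log\beta\,(1+o(1))$. *)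

theory Defs
  imports "HOL-Probability.Probability" "HOL-Library.Landau_Symbols"
begin

definition resid :: "nat \<Rightarrow> nat \<Rightarrow> nat" where
  "resid T k = (if k mod T = 0 then T else k mod T)"

definition batch :: "nat \<Rightarrow> nat \<Rightarrow> (nat \<Rightarrow> nat) \<Rightarrow> nat \<Rightarrow> nat" where
  "batch T E N k = (THE j. j \<in> {1..E} \<and> N (j - 1) < resid T k \<and> resid T k \<le> N j)"

definition batches_ok :: "nat \<Rightarrow> nat \<Rightarrow> (nat \<Rightarrow> nat) \<Rightarrow> bool" where
  "batches_ok T E N \<longleftrightarrow> T \<ge> 1 \<and> E \<ge> 1 \<and> N 0 = 0 \<and> N E = T \<and> (\<forall>j<E. N j < N (Suc j))"

text \<open>KL divergence D(P||Q) (natural log) is finite: P << Q and the log-likelihood ratio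
  is P-integrable.  Library convention: KL_divergence b Q P = D(P||Q).\<close>
definition KL_finite :: "'a measure \<Rightarrow> 'a measure \<Rightarrow> bool" where
  "KL_finite P Q \<longleftrightarrow> absolutely_continuous Q P \<and> sets P = sets Q \<and>
     integrable P (entropy_density (exp 1) Q P)"

definition KL :: "'a measure \<Rightarrow> 'a measure \<Rightarrow> real" where
  "KL P Q = KL_divergence (exp 1) Q P"

text \<open>Law of the observation sequence (Y_1, Y_2, ...) (index 0 is a dummy coordinate)
  under the change time gamma; gamma = None means no change (P_infinity).\<close>
definition obs_law :: "'a measure \<Rightarrow> (real \<Rightarrow> 'a \<Rightarrow> real) \<Rightarrow> (nat \<Rightarrow> nat)
    \<Rightarrow> (nat \<Rightarrow> real) \<Rightarrow> (nat \<Rightarrow> real) \<Rightarrow> nat option \<Rightarrow> (nat \<Rightarrow> 'a) measure" where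
  "obs_law \<mu> p b \<theta> la \<gamma> = PiM UNIV (\<lambda>k.
      density \<mu> (\<lambda>y. ennreal (p (case \<gamma> of None \<Rightarrow> \<theta> (b k)
                                   | Some g \<Rightarrow> if k < g then \<theta> (b k) else la (b k)) y)))"

definition Lam :: "real set \<Rightarrow> (nat \<Rightarrow> real) \<Rightarrow> real \<Rightarrow> nat \<Rightarrow> real set" where
  "Lam \<Theta> \<theta> \<epsilon> e = {l \<in> \<Theta>. \<bar>l - \<theta> e\<bar> \<ge> \<epsilon>}"

definition Wstat :: "(real \<Rightarrow> 'a \<Rightarrow> real) \<Rightarrow> (nat \<Rightarrow> nat) \<Rightarrow> nat \<Rightarrow> (nat \<Rightarrow> real)
    \<Rightarrow> (nat \<Rightarrow> real set) \<Rightarrow> nat \<Rightarrow> (nat \<Rightarrow> 'a) \<Rightarrow> real" where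
  "Wstat p b E \<theta> \<Lambda> n Y = Max ((\<lambda>k. SUP lam \<in> (PiE {1..E} \<Lambda>).
       (\<Sum>i=k..n. ln (p (lam (b i)) (Y i) / p (\<theta> (b i)) (Y i)))) ` {1..n})"

definition stop_time :: "(nat \<Rightarrow> (nat \<Rightarrow> 'a) \<Rightarrow> real) \<Rightarrow> real \<Rightarrow> (nat \<Rightarrow> 'a) \<Rightarrow> ennreal" where
  "stop_time W A Y = (if \<exists>n\<ge>1. W n Y > A then of_nat (LEAST n. n \<ge> 1 \<and> W n Y > A) else \<infinity>)"

end

theory Submission
  imports Defs
begin


lemma ennreal_all_nat_le_top:
  fixes x :: ennreal
  assumes "\<And>q. of_nat q \<le> x" shows "x = \<infinity>"
proof (rule ccontr)
  assume "x \<noteq> \<infinity>"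
  then obtain r where r: "r \<ge> 0" "x = ennreal r" by (cases x) auto
  have "of_nat (nat \<lceil>r\<rceil> + 1) \<le> x" by (rule assms)
  then have "ennreal (real (nat \<lceil>r\<rceil> + 1)) \<le> ennreal r" unfolding r(2) ennreal_of_nat_eq_real_of_nat .
  then have "real (nat \<lceil>r\<rceil> + 1) \<le> r" using r(1) by (simp only: ennreal_le_iff)
  then show False by linarith
qed

lemma pw_upper:
  fixes W :: "nat \<Rightarrow> (nat \<Rightarrow> 'a) \<Rightarrow> real" and Sn :: "nat \<Rightarrow> (nat \<Rightarrow> 'a) \<Rightarrow> real"
  assumes ge: "\<And>n. 1 \<le> n \<Longrightarrow> Sn n Y \<le> W n Y"
  shows "stop_time W A Y \<le> of_nat (n0+1) + (\<Sum>j. ennreal (exp ((A - Sn (n0+1+j) Y)/2)))"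
proof -
  define t where "t j = ennreal (exp ((A - Sn (n0+1+j) Y)/2))" for j
  have partial: "of_nat q \<le> (\<Sum>j. t j)" if q: "\<And>j. j < q \<Longrightarrow> \<not> W (n0+1+j) Y > A" for q
  proof -
    have "of_nat q = (\<Sum>j<q. (1::ennreal))" by simp
    also have "\<dots> \<le> (\<Sum>j<q. t j)"
    proof (intro sum_mono)
      fix j assume "j \<in> {..<q}"
      then have "Sn (n0+1+j) Y \<le> A" using q[of j] ge[of "n0+1+j"] by simp
      then have "1 \<le> exp ((A - Sn (n0+1+j) Y)/2)" by simp
      then show "1 \<le> t j" unfolding t_def by simp
    qed
    also have "\<dots> \<le> (\<Sum>j. t j)" by (intro sum_le_suminf) auto
    finally show ?thesis .
  qed
  show ?thesis
  proof (cases "\<exists>n\<ge>1. W n Y > A")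
    case ex: True
    define m where "m = (LEAST n. n \<ge> 1 \<and> W n Y > A)"
    have m: "m \<ge> 1 \<and> W m Y > A" unfolding m_def by (rule LeastI_ex) (use ex in blast)
    have before: "\<not> W n Y > A" if "1 \<le> n" "n < m" for n
      using not_less_Least[of n "\<lambda>n. n \<ge> 1 \<and> W n Y > A"] that unfolding m_def by blast
    have st: "stop_time W A Y = of_nat m" unfolding stop_time_def m_def by (rule if_P[OF ex])
    show ?thesis
    proof (cases "m \<le> n0 + 1")
      case True
      then have "of_nat m \<le> (of_nat (n0+1) :: ennreal)" using of_nat_mono[OF True] by (metis)
      also have "\<dots> \<le> of_nat (n0+1) + (\<Sum>j. t j)" by simp
      finally show ?thesis unfolding st t_def .
    next
      case False
      define q where "q = m - (n0+1)"
      have mq: "m = (n0+1) + q" using False unfolding q_def by simp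
      have "of_nat q \<le> (\<Sum>j. t j)"
        by (rule partial) (use before mq in auto)
      then have "of_nat (n0+1) + of_nat q \<le> of_nat (n0+1) + (\<Sum>j. t j)" by (rule add_left_mono)
      then show ?thesis unfolding st t_def mq by simp
    qed
  next
    case False
    then have st: "stop_time W A Y = \<infinity>" unfolding stop_time_def by (rule if_not_P)
    have "(\<Sum>j. t j) = \<infinity>"
      by (rule ennreal_all_nat_le_top, rule partial) (use False in auto)
    then show ?thesis unfolding st t_def by simp
  qed
qed




lemma PiM_prod_integral:
  fixes M :: "nat \<Rightarrow> 'a measure"
  assumes P: "\<And>i. prob_space (M i)" and J: "finite J"
    and f: "\<And>i. i \<in> J \<Longrightarrow> f i \<in> borel_measurable (M i)"
  shows "(\<integral>\<^sup>+ x. (\<Prod>i\<in>J. f i (x i)) \<partial>PiM UNIV M) = (\<Prod>i\<in>J. \<integral>\<^sup>+ y. f i y \<partial>M i)"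
proof -
  interpret product_prob_space M UNIV
    by (metis P prob_space_imp_sigma_finite product_prob_space.intro product_prob_space_axioms.intro product_sigma_finite.intro)
  have m: "(\<lambda>x. \<Prod>i\<in>J. f i (x i)) \<in> borel_measurable (PiM J M)"
    using f J by measurable
  have "(\<integral>\<^sup>+ x. (\<Prod>i\<in>J. f i (x i)) \<partial>PiM J M) = (\<integral>\<^sup>+ x. (\<Prod>i\<in>J. f i (restrict x J i)) \<partial>PiM UNIV M)"
    apply (subst distr_PiM_restrict_finite[symmetric, OF J])
    apply simp
    apply (subst nn_integral_distr)
    using m J by auto
  also have "\<dots> = (\<integral>\<^sup>+ x. (\<Prod>i\<in>J. f i (x i)) \<partial>PiM UNIV M)"
    by (intro nn_integral_cong prod.cong) auto
  finally show ?thesis using product_nn_integral_prod[OF J f] by simp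
qed



lemma batches_mono:
  assumes "batches_ok T E N" "i \<le> j" "j \<le> E"
  shows "N i \<le> N j"
  using assms(2,3)
proof (induction j)
  case 0 then show ?case by simp
next
  case (Suc j)
  show ?case
  proof (cases "i = Suc j")
    case False
    then have "N i \<le> N j" using Suc by simp
    also have "N j < N (Suc j)" using assms(1) Suc.prems unfolding batches_ok_def by auto
    finally show ?thesis by simp
  qed simp
qed

lemma batches_smono:
  assumes "batches_ok T E N" "i < j" "j \<le> E"
  shows "N i < N j"
proof -
  have "N i < N (Suc i)" using assms unfolding batches_ok_def by auto
  also have "N (Suc i) \<le> N j" using batches_mono[OF assms(1)] assms by simp
  finally show ?thesis .
qed

lemma resid_range: "T \<ge> 1 \<Longrightarrow> resid T k \<in> {1..T}"
  unfolding resid_def using mod_less_divisor[of T k] by auto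

lemma batch_in:
  assumes B: "batches_ok T E N"
  shows "batch T E N k \<in> {1..E}"
proof -
  define r where "r = resid T k"
  have r: "1 \<le> r" "r \<le> T" using resid_range[of T k] B unfolding r_def batches_ok_def by auto
  have ex: "\<exists>j. r \<le> N j" using r B unfolding batches_ok_def by auto
  define j where "j = (LEAST j. r \<le> N j)"
  have j1: "r \<le> N j" unfolding j_def using ex by (rule LeastI_ex)
  have jE: "j \<le> E" unfolding j_def using r B unfolding batches_ok_def by (intro Least_le) auto
  have j0: "j \<ge> 1"
  proof (rule ccontr)
    assume "\<not> j \<ge> 1" then have "j = 0" by simp
    then show False using j1 r B unfolding batches_ok_def by simp
  qed
  have j2: "N (j - 1) < r"
  proof (rule ccontr)
    assume "\<not> N (j - 1) < r"
    then have "j \<le> j - 1" unfolding j_def by (intro Least_le) simp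
    then show False using j0 by simp
  qed
  have P: "j \<in> {1..E} \<and> N (j - 1) < r \<and> r \<le> N j" using j0 jE j1 j2 by simp
  have U: "j' = j" if "j' \<in> {1..E} \<and> N (j' - 1) < r \<and> r \<le> N j'" for j'
  proof (rule ccontr)
    assume "j' \<noteq> j"
    then consider "j' < j" | "j < j'" by linarith
    then show False
    proof cases
      case 1
      then have "N j' \<le> N (j - 1)" using batches_mono[OF B, of j' "j-1"] jE by simp
      then show ?thesis using that j2 by simp
    next
      case 2
      then have "N j \<le> N (j' - 1)" using batches_mono[OF B, of j "j'-1"] that by force
      then show ?thesis using that j1 by simp
    qed
  qed
  have "batch T E N k = j"
    unfolding batch_def r_def[symmetric] apply (rule the_equality) apply (rule P) apply (rule U) by assumption
  then show ?thesis using P by simp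
qed



lemma W_gt:
  assumes fin: "finite (PiE {1..E} \<Lambda>)" and n: "1 \<le> n"
    and gt: "Wstat p b E \<theta> \<Lambda> n Y > A" and S: "Sup ({}::real set) \<le> A"
  shows "\<exists>k\<in>{1..n}. \<exists>lam\<in>PiE {1..E} \<Lambda>.
     (\<Sum>i=k..n. ln (p (lam (b i)) (Y i) / p (\<theta> (b i)) (Y i))) > A"
proof -
  let ?F = "\<lambda>k. SUP lam \<in> (PiE {1..E} \<Lambda>). (\<Sum>i=k..n. ln (p (lam (b i)) (Y i) / p (\<theta> (b i)) (Y i)))"
  have "A < Max (?F ` {1..n})" using gt unfolding Wstat_def by simp
  then obtain k where k: "k \<in> {1..n}" "A < ?F k"
    using n by (subst (asm) Max_gr_iff) auto
  show ?thesis
  proof (cases "PiE {1..E} \<Lambda> = {}")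
    case True
    then show ?thesis using k S by simp
  next
    case False
    then have "\<exists>lam\<in>PiE {1..E} \<Lambda>. A < (\<Sum>i=k..n. ln (p (lam (b i)) (Y i) / p (\<theta> (b i)) (Y i)))"
      using k(2) fin by (subst (asm) less_cSUP_iff) auto
    then show ?thesis using k(1) by blast
  qed
qed

lemma W_ge:
  assumes fin: "finite (PiE {1..E} \<Lambda>)" and n: "1 \<le> n" and lam: "lam \<in> PiE {1..E} \<Lambda>"
  shows "(\<Sum>i=1..n. ln (p (lam (b i)) (Y i) / p (\<theta> (b i)) (Y i))) \<le> Wstat p b E \<theta> \<Lambda> n Y"
proof -
  let ?F = "\<lambda>k. SUP lam \<in> (PiE {1..E} \<Lambda>). (\<Sum>i=k..n. ln (p (lam (b i)) (Y i) / p (\<theta> (b i)) (Y i)))"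
  have "(\<Sum>i=1..n. ln (p (lam (b i)) (Y i) / p (\<theta> (b i)) (Y i))) \<le> ?F 1"
    using fin lam by (intro cSUP_upper) auto
  also have "\<dots> \<le> Max (?F ` {1..n})" using n by (intro Max_ge) auto
  finally show ?thesis unfolding Wstat_def by simp
qed



context
  fixes \<mu> :: "'a measure" and p :: "real \<Rightarrow> 'a \<Rightarrow> real" and \<Theta> :: "real set"
  assumes dm: "\<And>t. t \<in> \<Theta> \<Longrightarrow> p t \<in> borel_measurable \<mu>"
    and dn: "\<And>t y. t \<in> \<Theta> \<Longrightarrow> y \<in> space \<mu> \<Longrightarrow> p t y \<ge> 0"
    and dp: "\<And>t. t \<in> \<Theta> \<Longrightarrow> prob_space (density \<mu> (\<lambda>y. ennreal (p t y)))"
begin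

lemma D_null:
  assumes t: "t \<in> \<Theta>"
  shows "{y \<in> space \<mu>. p t y = 0} \<in> null_sets (density \<mu> (\<lambda>y. ennreal (p t y)))"
proof -
  note [measurable] = dm[OF t]
  have S: "{y \<in> space \<mu>. p t y = 0} \<in> sets \<mu>" by measurable
  have "emeasure (density \<mu> (\<lambda>y. ennreal (p t y))) {y \<in> space \<mu>. p t y = 0}
     = (\<integral>\<^sup>+ y. ennreal (p t y) * indicator {y \<in> space \<mu>. p t y = 0} y \<partial>\<mu>)"
    by (rule emeasure_density) (auto simp: S)
  also have "\<dots> = (\<integral>\<^sup>+ y. 0 \<partial>\<mu>)"
    by (intro nn_integral_cong) (auto split: split_indicator)
  finally show ?thesis using S by (simp add: null_sets_def)
qed

lemma AE_pos:
  assumes s: "s \<in> \<Theta>" and t: "t \<in> \<Theta>"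
    and ac: "absolutely_continuous (density \<mu> (\<lambda>y. ennreal (p t y))) (density \<mu> (\<lambda>y. ennreal (p s y)))"
  shows "AE y in density \<mu> (\<lambda>y. ennreal (p s y)). p t y > 0"
proof (rule AE_I')
  show "{y \<in> space \<mu>. p t y = 0} \<in> null_sets (density \<mu> (\<lambda>y. ennreal (p s y)))"
    using D_null[OF t] ac unfolding absolutely_continuous_def by auto
  show "{y \<in> space (density \<mu> (\<lambda>y. ennreal (p s y))). \<not> 0 < p t y} \<subseteq> {y \<in> space \<mu>. p t y = 0}"
    using dn[OF t] by (auto simp: less_le)
qed

lemma AE_pos_self:
  assumes t: "t \<in> \<Theta>"
  shows "AE y in density \<mu> (\<lambda>y. ennreal (p t y)). p t y > 0"
proof (rule AE_I')
  show "{y \<in> space \<mu>. p t y = 0} \<in> null_sets (density \<mu> (\<lambda>y. ennreal (p t y)))"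
    using D_null[OF t] by auto
  show "{y \<in> space (density \<mu> (\<lambda>y. ennreal (p t y))). \<not> 0 < p t y} \<subseteq> {y \<in> space \<mu>. p t y = 0}"
    using dn[OF t] by (auto simp: less_le)
qed

lemma int_dens_1:
  assumes t: "t \<in> \<Theta>"
  shows "(\<integral>\<^sup>+ y. ennreal (p t y) \<partial>\<mu>) = 1"
proof -
  interpret prob_space "density \<mu> (\<lambda>y. ennreal (p t y))" by (rule dp[OF t])
  have "(\<integral>\<^sup>+ y. 1 \<partial>density \<mu> (\<lambda>y. ennreal (p t y))) = (\<integral>\<^sup>+ y. ennreal (p t y) * 1 \<partial>\<mu>)"
    using dm[OF t] by (intro nn_integral_density) auto
  then show ?thesis using emeasure_space_1 by simp
qed

lemma ratio_le1:
  assumes s: "s \<in> \<Theta>" and t: "t \<in> \<Theta>"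
    and ac: "absolutely_continuous (density \<mu> (\<lambda>y. ennreal (p t y))) (density \<mu> (\<lambda>y. ennreal (p s y)))"
  shows "(\<integral>\<^sup>+ y. ennreal (exp (ln (p t y / p s y))) \<partial>density \<mu> (\<lambda>y. ennreal (p s y))) \<le> 1"
proof -
  note [measurable] = dm[OF t] dm[OF s]
  have "(\<integral>\<^sup>+ y. ennreal (exp (ln (p t y / p s y))) \<partial>density \<mu> (\<lambda>y. ennreal (p s y)))
      = (\<integral>\<^sup>+ y. ennreal (p t y / p s y) \<partial>density \<mu> (\<lambda>y. ennreal (p s y)))"
    using AE_pos[OF s t ac] AE_pos_self[OF s] by (intro nn_integral_cong_AE) auto
  also have "\<dots> = (\<integral>\<^sup>+ y. ennreal (p s y) * ennreal (p t y / p s y) \<partial>\<mu>)"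
    by (intro nn_integral_density) auto
  also have "\<dots> \<le> (\<integral>\<^sup>+ y. ennreal (p t y) \<partial>\<mu>)"
  proof (intro nn_integral_mono)
    fix y assume y: "y \<in> space \<mu>"
    show "ennreal (p s y) * ennreal (p t y / p s y) \<le> ennreal (p t y)"
    proof (cases "p s y = 0")
      case False
      then have "p s y > 0" using dn[OF s y] by simp
      then show ?thesis using dn[OF t y] by (simp add: ennreal_mult'[symmetric])
    qed simp
  qed
  also have "\<dots> = 1" by (rule int_dens_1[OF t])
  finally show ?thesis .
qed


lemma sqrt_id:
  fixes a b :: real assumes "a > 0" "b > 0"
  shows "exp (- (ln (a / b) / 2)) = sqrt (b / a)"
proof -
  have "sqrt (b / a) = (b / a) powr (1/2)" using assms by (simp add: powr_half_sqrt)
  also have "\<dots> = exp (1/2 * ln (b / a))" using assms by (simp add: powr_def)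
  also have "ln (b / a) = - ln (a / b)" using assms by (simp add: ln_div)
  finally show ?thesis by simp
qed

lemma hell_lt1:
  assumes s: "s \<in> \<Theta>" and t: "t \<in> \<Theta>"
    and ac: "absolutely_continuous (density \<mu> (\<lambda>y. ennreal (p s y))) (density \<mu> (\<lambda>y. ennreal (p t y)))"
    and ne: "density \<mu> (\<lambda>y. ennreal (p t y)) \<noteq> density \<mu> (\<lambda>y. ennreal (p s y))"
  shows "(\<integral>\<^sup>+ y. ennreal (exp (- ln (p t y / p s y) / 2)) \<partial>density \<mu> (\<lambda>y. ennreal (p t y))) < 1"
proof -
  note [measurable] = dm[OF t] dm[OF s]
  define h where "h y = ennreal (sqrt (p t y * p s y))" for y
  define d where "d y = ennreal ((p t y + p s y) / 2 - sqrt (p t y * p s y))" for y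
  have hm[measurable]: "h \<in> borel_measurable \<mu>" unfolding h_def by measurable
  have dmm[measurable]: "d \<in> borel_measurable \<mu>" unfolding d_def by measurable
  have alg: "(a + b) / 2 - sqrt (a * b) = (sqrt a - sqrt b)^2 / 2" if "a \<ge> 0" "b \<ge> 0" for a b :: real
    using that by (simp add: power2_eq_square real_sqrt_mult algebra_simps)
  have "(\<integral>\<^sup>+ y. ennreal (exp (- ln (p t y / p s y) / 2)) \<partial>density \<mu> (\<lambda>y. ennreal (p t y)))
      = (\<integral>\<^sup>+ y. ennreal (sqrt (p s y / p t y)) \<partial>density \<mu> (\<lambda>y. ennreal (p t y)))"
    using AE_pos[OF t s ac] AE_pos_self[OF t] by (intro nn_integral_cong_AE) (auto simp: sqrt_id)
  also have "\<dots> = (\<integral>\<^sup>+ y. ennreal (p t y) * ennreal (sqrt (p s y / p t y)) \<partial>\<mu>)"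
    by (intro nn_integral_density) auto
  also have "\<dots> = (\<integral>\<^sup>+ y. h y \<partial>\<mu>)"
  proof (intro nn_integral_cong)
    fix y assume y: "y \<in> space \<mu>"
    show "ennreal (p t y) * ennreal (sqrt (p s y / p t y)) = h y"
    proof (cases "p t y = 0")
      case False
      then have pt: "p t y > 0" using dn[OF t y] by simp
      have "p t y * sqrt (p s y / p t y) = sqrt (p t y * p s y)"
        using pt dn[OF s y] by (simp add: real_sqrt_divide real_sqrt_mult field_simps)
      then show ?thesis unfolding h_def using pt dn[OF s y] by (simp add: ennreal_mult'[symmetric])
    qed (simp add: h_def)
  qed
  finally have eq: "(\<integral>\<^sup>+ y. ennreal (exp (- ln (p t y / p s y) / 2)) \<partial>density \<mu> (\<lambda>y. ennreal (p t y)))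
     = (\<integral>\<^sup>+ y. h y \<partial>\<mu>)" .
  have hd: "ennreal (1/2) * (ennreal (p t y) + ennreal (p s y)) = h y + d y" if y: "y \<in> space \<mu>" for y
  proof -
    have nn: "p t y \<ge> 0" "p s y \<ge> 0" using dn[OF t y] dn[OF s y] by auto
    have "sqrt (p t y * p s y) \<le> (p t y + p s y) / 2" using alg[OF nn] zero_le_power2[of "sqrt (p t y) - sqrt (p s y)"] by linarith
    then have "h y + d y = ennreal ((p t y + p s y) / 2)" unfolding h_def d_def
      using nn by (subst ennreal_plus[symmetric]) auto
    moreover have "ennreal (1/2) * (ennreal (p t y) + ennreal (p s y)) = ennreal ((p t y + p s y) / 2)"
    proof -
      have "ennreal (1/2) * (ennreal (p t y) + ennreal (p s y)) = ennreal (1/2) * ennreal (p t y + p s y)"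
        using nn by (simp only: ennreal_plus)
      also have "\<dots> = ennreal (1/2 * (p t y + p s y))" by (rule ennreal_mult'[symmetric]) simp
      finally show ?thesis by simp
    qed
    ultimately show ?thesis by simp
  qed
  have "(\<integral>\<^sup>+ y. ennreal (1/2) * (ennreal (p t y) + ennreal (p s y)) \<partial>\<mu>)
      = ennreal (1/2) * ((\<integral>\<^sup>+ y. ennreal (p t y) \<partial>\<mu>) + (\<integral>\<^sup>+ y. ennreal (p s y) \<partial>\<mu>))"
    by (simp add: nn_integral_cmult nn_integral_add)
  also have "\<dots> = ennreal (1/2) * ennreal 2" using int_dens_1[OF t] int_dens_1[OF s]
    by (simp del: ennreal_half)
  also have "\<dots> = 1" by (subst ennreal_mult'[symmetric]) auto
  finally have "1 = (\<integral>\<^sup>+ y. h y + d y \<partial>\<mu>)"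
    using hd by (metis (no_types, lifting) nn_integral_cong)
  also have "\<dots> = (\<integral>\<^sup>+ y. h y \<partial>\<mu>) + (\<integral>\<^sup>+ y. d y \<partial>\<mu>)"
    by (simp add: nn_integral_add)
  finally have sum1: "1 = (\<integral>\<^sup>+ y. h y \<partial>\<mu>) + (\<integral>\<^sup>+ y. d y \<partial>\<mu>)" .
  show ?thesis unfolding eq
  proof (rule ccontr)
    assume "\<not> (\<integral>\<^sup>+ y. h y \<partial>\<mu>) < 1"
    then have "(\<integral>\<^sup>+ y. h y \<partial>\<mu>) \<ge> 1" by simp
    moreover have "(\<integral>\<^sup>+ y. h y \<partial>\<mu>) \<le> 1" using sum1 by (metis le_iff_add)
    ultimately have h1: "(\<integral>\<^sup>+ y. h y \<partial>\<mu>) = 1" by simp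
    then have "1 + (\<integral>\<^sup>+ y. d y \<partial>\<mu>) = 1 + 0" using sum1 by simp
    then have "(\<integral>\<^sup>+ y. d y \<partial>\<mu>) = 0" by (simp add: ennreal_add_left_cancel)
    then have "AE y in \<mu>. d y = 0" by (simp add: nn_integral_0_iff_AE)
    then have "AE y in \<mu>. ennreal (p t y) = ennreal (p s y)"
    proof (rule AE_mp, intro AE_I2 impI)
      fix y assume y: "y \<in> space \<mu>" and "d y = 0"
      have nn: "p t y \<ge> 0" "p s y \<ge> 0" using dn[OF t y] dn[OF s y] by auto
      have "(p t y + p s y) / 2 - sqrt (p t y * p s y) \<le> 0" using \<open>d y = 0\<close> unfolding d_def by (simp add: ennreal_eq_0_iff)
      then have "(sqrt (p t y) - sqrt (p s y))^2 = 0" using alg[OF nn] zero_le_power2[of "sqrt (p t y) - sqrt (p s y)"] by linarith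
      then have "sqrt (p t y) = sqrt (p s y)" by simp
      then show "ennreal (p t y) = ennreal (p s y)" using nn by simp
    qed
    then have "density \<mu> (\<lambda>y. ennreal (p t y)) = density \<mu> (\<lambda>y. ennreal (p s y))"
      by (intro density_cong) auto
    then show False using ne by simp
  qed
qed

end



lemma prod_exp_sum:
  fixes M :: "nat \<Rightarrow> 'a measure"
  assumes P: "\<And>i. prob_space (M i)" and J: "finite J"
    and g: "\<And>i. i \<in> J \<Longrightarrow> g i \<in> borel_measurable (M i)"
  shows "(\<integral>\<^sup>+ Y. ennreal (exp (c * (\<Sum>i\<in>J. g i (Y i)))) \<partial>PiM UNIV M)
       = (\<Prod>i\<in>J. \<integral>\<^sup>+ y. ennreal (exp (c * g i y)) \<partial>M i)"
proof -
  have "(\<integral>\<^sup>+ Y. ennreal (exp (c * (\<Sum>i\<in>J. g i (Y i)))) \<partial>PiM UNIV M)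
      = (\<integral>\<^sup>+ Y. (\<Prod>i\<in>J. (\<lambda>i y. ennreal (exp (c * g i y))) i (Y i)) \<partial>PiM UNIV M)"
    by (intro nn_integral_cong) (simp add: sum_distrib_left exp_sum[OF J] prod_ennreal)
  also have "\<dots> = (\<Prod>i\<in>J. \<integral>\<^sup>+ y. ennreal (exp (c * g i y)) \<partial>M i)"
    using g by (intro PiM_prod_integral[OF P J]) auto
  finally show ?thesis .
qed

lemma meas_llr:
  fixes p :: "'b \<Rightarrow> 'a \<Rightarrow> real"
  assumes "p l \<in> borel_measurable \<mu>" "p s \<in> borel_measurable \<mu>" "sets M = sets \<mu>"
  shows "(\<lambda>y. ln (p l y / p s y)) \<in> borel_measurable M"
proof -
  have "(\<lambda>y. ln (p l y / p s y)) \<in> borel_measurable \<mu>"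
    by (intro borel_measurable_ln borel_measurable_divide assms(1,2))
  then show ?thesis using measurable_cong_sets[OF assms(3) refl] by blast
qed

lemma meas_llr_PiM:
  fixes M :: "nat \<Rightarrow> 'a measure" and p :: "'b \<Rightarrow> 'a \<Rightarrow> real"
  assumes "p l \<in> borel_measurable \<mu>" "p s \<in> borel_measurable \<mu>" "sets (M i) = sets \<mu>"
  shows "(\<lambda>Y. ln (p l (Y i) / p s (Y i))) \<in> borel_measurable (PiM UNIV M)"
  using measurable_compose[OF measurable_component_singleton[of i UNIV M] meas_llr[OF assms]] by simp




context
  fixes \<mu> :: "'a measure" and p :: "real \<Rightarrow> 'a \<Rightarrow> real" and \<Theta> :: "real set"
    and T E :: nat and N :: "nat \<Rightarrow> nat" and \<theta> :: "nat \<Rightarrow> real" and \<epsilon> :: real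
  assumes dens_meas: "\<And>t. t \<in> \<Theta> \<Longrightarrow> p t \<in> borel_measurable \<mu>"
    and dens_nonneg: "\<And>t y. t \<in> \<Theta> \<Longrightarrow> y \<in> space \<mu> \<Longrightarrow> p t y \<ge> 0"
    and dens_prob: "\<And>t. t \<in> \<Theta> \<Longrightarrow> prob_space (density \<mu> (\<lambda>y. ennreal (p t y)))"
    and KL_fin_pos: "\<And>t s. t \<in> \<Theta> \<Longrightarrow> s \<in> \<Theta> \<Longrightarrow> t \<noteq> s \<Longrightarrow>
        KL_finite (density \<mu> (\<lambda>y. ennreal (p t y))) (density \<mu> (\<lambda>y. ennreal (p s y)))
        \<and> KL (density \<mu> (\<lambda>y. ennreal (p t y))) (density \<mu> (\<lambda>y. ennreal (p s y))) > 0"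
    and batches: "batches_ok T E N"
    and theta_in: "\<And>e. e \<in> {1..E} \<Longrightarrow> \<theta> e \<in> \<Theta>"
    and eps_pos: "\<epsilon> > 0"
    and Lam_finite: "\<And>e. e \<in> {1..E} \<Longrightarrow> finite (Lam \<Theta> \<theta> \<epsilon> e)"
begin

lemma Lam_sub: "l \<in> Lam \<Theta> \<theta> \<epsilon> e \<Longrightarrow> l \<in> \<Theta>"
  unfolding Lam_def by auto

lemma Lam_ne: "e \<in> {1..E} \<Longrightarrow> l \<in> Lam \<Theta> \<theta> \<epsilon> e \<Longrightarrow> l \<noteq> \<theta> e"
  unfolding Lam_def using eps_pos by auto

lemma ac_of:
  assumes "t \<in> \<Theta>" "s \<in> \<Theta>" "t \<noteq> s"
  shows "absolutely_continuous (density \<mu> (\<lambda>y. ennreal (p s y))) (density \<mu> (\<lambda>y. ennreal (p t y)))"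
  using KL_fin_pos[OF assms] unfolding KL_finite_def by auto

lemma D_ne:
  assumes "t \<in> \<Theta>" "s \<in> \<Theta>" "t \<noteq> s"
  shows "density \<mu> (\<lambda>y. ennreal (p t y)) \<noteq> density \<mu> (\<lambda>y. ennreal (p s y))"
proof
  assume eq: "density \<mu> (\<lambda>y. ennreal (p t y)) = density \<mu> (\<lambda>y. ennreal (p s y))"
  interpret prob_space "density \<mu> (\<lambda>y. ennreal (p s y))" using dens_prob assms by auto
  have "KL (density \<mu> (\<lambda>y. ennreal (p t y))) (density \<mu> (\<lambda>y. ennreal (p s y))) = 0"
    unfolding KL_def eq by (rule KL_same_eq_0)
  then show False using KL_fin_pos[OF assms] by simp
qed

lemma fin_L: "finite (PiE {1..E} (Lam \<Theta> \<theta> \<epsilon>))"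
  using Lam_finite by (intro finite_PiE) auto

lemma prob_law: 
  assumes "\<And>k. par k \<in> \<Theta>"
  shows "prob_space (PiM UNIV (\<lambda>k. density \<mu> (\<lambda>y. ennreal (p (par k) y))))"
  using dens_prob assms by (intro prob_space_PiM) auto

lemma bad_prob:
  assumes lam: "lam \<in> PiE {1..E} (Lam \<Theta> \<theta> \<epsilon>)"
  shows "emeasure (PiM UNIV (\<lambda>k. density \<mu> (\<lambda>y. ennreal (p (\<theta> (batch T E N k)) y))))
     {Y \<in> space (PiM UNIV (\<lambda>k. density \<mu> (\<lambda>y. ennreal (p (\<theta> (batch T E N k)) y)))).
        A < (\<Sum>i=k..m. ln (p (lam (batch T E N i)) (Y i) / p (\<theta> (batch T E N i)) (Y i)))}
     \<le> ennreal (exp (- A))"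
proof -
  define b where "b = batch T E N"
  define M where "M = (\<lambda>k. density \<mu> (\<lambda>y. ennreal (p (\<theta> (b k)) y)))"
  have bin: "b i \<in> {1..E}" for i unfolding b_def by (rule batch_in[OF batches])
  have th: "\<theta> (b i) \<in> \<Theta>" for i using theta_in bin by auto
  have lm: "lam (b i) \<in> Lam \<Theta> \<theta> \<epsilon> (b i)" for i using lam bin by auto
  have PM: "prob_space (M i)" for i unfolding M_def using dens_prob th by auto
  have lT: "lam (b i) \<in> \<Theta>" for i using Lam_sub lm by blast
  have lne: "lam (b i) \<noteq> \<theta> (b i)" for i using Lam_ne bin lm by blast
  have gm: "(\<lambda>y. ln (p (lam (b i)) y / p (\<theta> (b i)) y)) \<in> borel_measurable (M i)" for i
    unfolding M_def using dens_meas th lm Lam_sub by (intro meas_llr) auto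
  have Sm: "(\<lambda>Y. \<Sum>i=k..m. ln (p (lam (b i)) (Y i) / p (\<theta> (b i)) (Y i))) \<in> borel_measurable (PiM UNIV M)"
    unfolding M_def using dens_meas th lm Lam_sub by (intro borel_measurable_sum meas_llr_PiM) auto
  define B where "B = {Y \<in> space (PiM UNIV M). A < (\<Sum>i=k..m. ln (p (lam (b i)) (Y i) / p (\<theta> (b i)) (Y i)))}"
  have Bs: "B \<in> sets (PiM UNIV M)" unfolding B_def using Sm by measurable
  have Int: "(\<integral>\<^sup>+ Y. ennreal (exp (1 * (\<Sum>i\<in>{k..m}. ln (p (lam (b i)) (Y i) / p (\<theta> (b i)) (Y i))))) \<partial>PiM UNIV M) \<le> 1"
  proof -
    have "(\<integral>\<^sup>+ Y. ennreal (exp (1 * (\<Sum>i\<in>{k..m}. ln (p (lam (b i)) (Y i) / p (\<theta> (b i)) (Y i))))) \<partial>PiM UNIV M)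
      = (\<Prod>i\<in>{k..m}. \<integral>\<^sup>+ y. ennreal (exp (1 * ln (p (lam (b i)) y / p (\<theta> (b i)) y))) \<partial>M i)"
      using PM gm by (intro prod_exp_sum) auto
    also have "\<dots> \<le> 1"
    proof (intro prod_le_1 conjI)
      fix i
      show "(\<integral>\<^sup>+ y. ennreal (exp (1 * ln (p (lam (b i)) y / p (\<theta> (b i)) y))) \<partial>M i) \<le> 1"
        unfolding M_def using lT[of i] th[of i] lne[of i]
        by (simp, intro ratio_le1[OF dens_meas dens_nonneg dens_prob] ac_of) auto
    qed auto
    finally show ?thesis .
  qed
  have "emeasure (PiM UNIV M) B = (\<integral>\<^sup>+ Y. indicator B Y \<partial>PiM UNIV M)"
    using Bs by simp
  also have "\<dots> \<le> (\<integral>\<^sup>+ Y. ennreal (exp (- A)) * ennreal (exp (1 * (\<Sum>i\<in>{k..m}. ln (p (lam (b i)) (Y i) / p (\<theta> (b i)) (Y i))))) \<partial>PiM UNIV M)"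
  proof (intro nn_integral_mono)
    fix Y assume "Y \<in> space (PiM UNIV M)"
    show "indicator B Y \<le> ennreal (exp (- A)) * ennreal (exp (1 * (\<Sum>i\<in>{k..m}. ln (p (lam (b i)) (Y i) / p (\<theta> (b i)) (Y i)))))"
    proof (cases "Y \<in> B")
      case True
      then have "1 \<le> exp (- A) * exp (\<Sum>i\<in>{k..m}. ln (p (lam (b i)) (Y i) / p (\<theta> (b i)) (Y i)))"
        unfolding B_def by (simp add: exp_minus_inverse exp_add[symmetric])
      then show ?thesis using True by (simp add: ennreal_mult'[symmetric])
    qed simp
  qed
  also have "\<dots> = ennreal (exp (- A)) * (\<integral>\<^sup>+ Y. ennreal (exp (1 * (\<Sum>i\<in>{k..m}. ln (p (lam (b i)) (Y i) / p (\<theta> (b i)) (Y i))))) \<partial>PiM UNIV M)"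
    using Sm by (intro nn_integral_cmult) auto
  also have "\<dots> \<le> ennreal (exp (- A)) * 1"
    using Int by (intro mult_left_mono) auto
  finally show ?thesis unfolding B_def M_def b_def by simp
qed


lemma lower:
  assumes A: "Sup ({}::real set) \<le> A" and n: "1 \<le> n"
  shows "ennreal (real n * (1 - real n ^ 2 * real (card (PiE {1..E} (Lam \<Theta> \<theta> \<epsilon>))) * exp (- A)))
    \<le> (\<integral>\<^sup>+ Y. stop_time (\<lambda>n. Wstat p (batch T E N) E \<theta> (Lam \<Theta> \<theta> \<epsilon>) n) A Y
             \<partial>obs_law \<mu> p (batch T E N) \<theta> \<theta> None)"
proof -
  define b where "b = batch T E N"
  define L where "L = PiE {1..E} (Lam \<Theta> \<theta> \<epsilon>)"
  define P where "P = PiM UNIV (\<lambda>k. density \<mu> (\<lambda>y. ennreal (p (\<theta> (b k)) y)))"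
  have bin: "b i \<in> {1..E}" for i unfolding b_def by (rule batch_in[OF batches])
  have th: "\<theta> (b i) \<in> \<Theta>" for i using theta_in bin by auto
  interpret prob_space P unfolding P_def using th by (intro prob_law) auto
  have law: "obs_law \<mu> p (batch T E N) \<theta> \<theta> None = P" unfolding obs_law_def P_def b_def by simp
  define S where "S lam k m Y = (\<Sum>i=k..m. ln (p (lam (b i)) (Y i) / p (\<theta> (b i)) (Y i)))" for lam k m Y
  define Bad where "Bad x = (case x of (m, k, lam) \<Rightarrow> {Y \<in> space P. A < S lam k m Y})" for x
  define I where "I = {(m, k, lam). m \<in> {1..n} \<and> k \<in> {1..m} \<and> lam \<in> L}"
  have IS: "I \<subseteq> {1..n} \<times> {1..n} \<times> L" unfolding I_def by auto
  have finI: "finite I" using finite_subset[OF IS] fin_L unfolding L_def by auto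
  have cardI: "card I \<le> n * n * card L"
    using card_mono[OF _ IS] fin_L unfolding L_def by (simp add: card_cartesian_product)
  have Bad_le: "emeasure P (Bad x) \<le> ennreal (exp (- A))" if "x \<in> I" for x
    using that bad_prob unfolding Bad_def I_def S_def P_def b_def L_def by auto
  have Bad_sets: "Bad x \<in> sets P" if "x \<in> I" for x
  proof -
    obtain m k lam where x: "x = (m, k, lam)" using prod_cases3 by blast
    have lam: "lam \<in> L" using that x unfolding I_def by auto
    have lm: "lam (b i) \<in> Lam \<Theta> \<theta> \<epsilon> (b i)" for i using lam bin unfolding L_def by auto
    have Sm: "S lam k m \<in> borel_measurable P"
      unfolding P_def S_def using dens_meas th lm Lam_sub by (intro borel_measurable_sum meas_llr_PiM) auto
    show ?thesis unfolding x Bad_def prod.case using Sm by measurable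
  qed
  define U where "U = (\<Union>x\<in>I. Bad x)"
  have Us: "U \<in> sets P" unfolding U_def using finI Bad_sets by auto
  have "measure P U \<le> (\<Sum>x\<in>I. measure P (Bad x))"
    unfolding U_def using finI Bad_sets by (intro finite_measure_subadditive_finite) auto
  also have "\<dots> \<le> (\<Sum>x\<in>I. exp (- A))"
  proof (intro sum_mono)
    fix x assume x: "x \<in> I"
    show "measure P (Bad x) \<le> exp (- A)"
      using Bad_le[OF x] by (simp add: emeasure_eq_measure)
  qed
  also have "\<dots> = real (card I) * exp (- A)" by simp
  also have "\<dots> \<le> real (n * n * card L) * exp (- A)"
  proof (intro mult_right_mono)
    show "real (card I) \<le> real (n * n * card L)" using cardI by (simp only: of_nat_le_iff)
  qed auto
  finally have mU: "measure P U \<le> real n ^ 2 * real (card L) * exp (- A)"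
    by (simp add: power2_eq_square)
  define G where "G = space P - U"
  have Gs: "G \<in> sets P" unfolding G_def using Us by auto
  have mG: "measure P G = 1 - measure P U" unfolding G_def using Us prob_compl by simp
  have pw: "of_nat n * indicator G Y \<le> stop_time (\<lambda>n. Wstat p b E \<theta> (Lam \<Theta> \<theta> \<epsilon>) n) A Y" for Y
  proof (cases "Y \<in> G")
    case True
    have noW: "\<not> Wstat p b E \<theta> (Lam \<Theta> \<theta> \<epsilon>) m Y > A" if m: "m \<in> {1..n}" for m
    proof
      assume Wg: "Wstat p b E \<theta> (Lam \<Theta> \<theta> \<epsilon>) m Y > A"
      have "\<exists>k\<in>{1..m}. \<exists>lam\<in>PiE {1..E} (Lam \<Theta> \<theta> \<epsilon>). A < (\<Sum>i=k..m. ln (p (lam (b i)) (Y i) / p (\<theta> (b i)) (Y i)))"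
        using W_gt[OF fin_L _ Wg A] m by simp
      then obtain k lam where k: "k \<in> {1..m}" "lam \<in> L" "A < S lam k m Y"
        unfolding L_def S_def by blast
      have YP: "Y \<in> space P" using True unfolding G_def by blast
      have "Y \<in> Bad (m, k, lam)" unfolding Bad_def prod.case using YP k(3) by blast
      moreover have "(m, k, lam) \<in> I" unfolding I_def using k(1,2) m by blast
      ultimately have "Y \<in> U" unfolding U_def by blast
      then show False using True unfolding G_def by blast
    qed
    show ?thesis
    proof (cases "\<exists>m\<ge>1. Wstat p b E \<theta> (Lam \<Theta> \<theta> \<epsilon>) m Y > A")
      case ex: True
      define m where "m = (LEAST m. m \<ge> 1 \<and> Wstat p b E \<theta> (Lam \<Theta> \<theta> \<epsilon>) m Y > A)"
      have m: "m \<ge> 1 \<and> Wstat p b E \<theta> (Lam \<Theta> \<theta> \<epsilon>) m Y > A"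
        unfolding m_def by (rule LeastI_ex) (use ex in blast)
      have nm: "n < m"
      proof (rule ccontr)
        assume "\<not> n < m"
        then have "m \<in> {1..n}" using m by simp
        then show False using noW m by blast
      qed
      have st: "stop_time (\<lambda>n. Wstat p b E \<theta> (Lam \<Theta> \<theta> \<epsilon>) n) A Y = of_nat m"
        unfolding stop_time_def m_def by (rule if_P[OF ex])
      show ?thesis using nm True unfolding st by (simp add: indicator_def)
    next
      case False
      then have "stop_time (\<lambda>n. Wstat p b E \<theta> (Lam \<Theta> \<theta> \<epsilon>) n) A Y = \<infinity>"
        unfolding stop_time_def by (rule if_not_P)
      then show ?thesis by simp
    qed
  qed (simp add: indicator_def)
  have "ennreal (real n * (1 - real n ^ 2 * real (card L) * exp (- A))) \<le> ennreal (real n * measure P G)"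
    using mG mU by (intro ennreal_leI mult_left_mono) auto
  also have "\<dots> = of_nat n * emeasure P G"
    by (simp add: emeasure_eq_measure ennreal_mult' ennreal_of_nat_eq_real_of_nat)
  also have "\<dots> = (\<integral>\<^sup>+ Y. of_nat n * indicator G Y \<partial>P)"
    using Gs by (simp add: nn_integral_cmult_indicator)
  also have "\<dots> \<le> (\<integral>\<^sup>+ Y. stop_time (\<lambda>n. Wstat p b E \<theta> (Lam \<Theta> \<theta> \<epsilon>) n) A Y \<partial>P)"
    by (intro nn_integral_mono pw)
  finally show ?thesis unfolding law L_def b_def .
qed


lemma prod_mono_ennreal: "(\<And>i. i \<in> A \<Longrightarrow> f i \<le> g i) \<Longrightarrow> prod f A \<le> (prod g A :: ennreal)"
  by (induct A rule: infinite_finite_induct) (auto intro!: mult_mono)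

lemma upper:
  assumes la: "\<forall>e\<in>{1..E}. la e \<in> Lam \<Theta> \<theta> \<epsilon> e"
    and r: "0 < r" "r < 1"
    and rho: "\<And>e l. e \<in> {1..E} \<Longrightarrow> l \<in> Lam \<Theta> \<theta> \<epsilon> e \<Longrightarrow>
       (\<integral>\<^sup>+ y. ennreal (exp (- ln (p l y / p (\<theta> e) y) / 2)) \<partial>density \<mu> (\<lambda>y. ennreal (p l y))) \<le> ennreal r"
    and A: "A > 0"
  shows "(\<integral>\<^sup>+ Y. stop_time (\<lambda>n. Wstat p (batch T E N) E \<theta> (Lam \<Theta> \<theta> \<epsilon>) n) A Y
             \<partial>obs_law \<mu> p (batch T E N) \<theta> la (Some 1))
     \<le> ennreal (A / (2 * ln (1/r)) + 2 + 1 / (1 - r))"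
proof -
  define b where "b = batch T E N"
  define M where "M = (\<lambda>k. density \<mu> (\<lambda>y. ennreal (p (if k < 1 then \<theta> (b k) else la (b k)) y)))"
  define P where "P = PiM UNIV M"
  have bin: "b i \<in> {1..E}" for i unfolding b_def by (rule batch_in[OF batches])
  have th: "\<theta> (b i) \<in> \<Theta>" for i using theta_in bin by auto
  have lm: "la (b i) \<in> Lam \<Theta> \<theta> \<epsilon> (b i)" for i using la bin by auto
  have lT: "la (b i) \<in> \<Theta>" for i using Lam_sub lm by blast
  have parT: "(if k < 1 then \<theta> (b k) else la (b k)) \<in> \<Theta>" for k using th lT by auto
  have PM: "prob_space (M i)" for i unfolding M_def using dens_prob parT by auto
  have Mi: "M i = density \<mu> (\<lambda>y. ennreal (p (la (b i)) y))" if "i \<ge> 1" for i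
    unfolding M_def using that by simp
  have law: "obs_law \<mu> p (batch T E N) \<theta> la (Some 1) = P" unfolding obs_law_def P_def M_def b_def by simp
  define Sn where "Sn n Y = (\<Sum>i=1..n. ln (p (la (b i)) (Y i) / p (\<theta> (b i)) (Y i)))" for n Y
  define lam0 where "lam0 = restrict la {1..E}"
  have lam0: "lam0 \<in> PiE {1..E} (Lam \<Theta> \<theta> \<epsilon>)" unfolding lam0_def using la by auto
  have ge: "Sn n Y \<le> Wstat p b E \<theta> (Lam \<Theta> \<theta> \<epsilon>) n Y" if "1 \<le> n" for n Y
  proof -
    have "Sn n Y = (\<Sum>i=1..n. ln (p (lam0 (b i)) (Y i) / p (\<theta> (b i)) (Y i)))"
      unfolding Sn_def lam0_def using bin by (intro sum.cong) auto
    also have "\<dots> \<le> Wstat p b E \<theta> (Lam \<Theta> \<theta> \<epsilon>) n Y" by (rule W_ge[OF fin_L that lam0])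
    finally show ?thesis .
  qed
  define c where "c = ln (1/r)"
  have c: "c > 0" unfolding c_def using r by simp
  define n0 where "n0 = nat \<lceil>A / (2 * c)\<rceil>"
  have x0: "0 \<le> A / (2 * c)" using A c by simp
  have nn0: "real n0 = real_of_int \<lceil>A / (2 * c)\<rceil>" unfolding n0_def using x0 by simp
  have n0: "A / (2 * c) \<le> real n0" "real n0 \<le> A / (2 * c) + 1"
    unfolding nn0 using ceiling_correct[of "A / (2 * c)"] by linarith+
  have gm: "(\<lambda>y. ln (p (la (b i)) y / p (\<theta> (b i)) y)) \<in> borel_measurable (M i)" for i
    unfolding M_def using dens_meas th lT by (intro meas_llr) auto
  have Snm: "Sn n \<in> borel_measurable P" for n
    unfolding P_def Sn_def M_def using dens_meas th lT
    by (intro borel_measurable_sum meas_llr_PiM) auto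
  define t where "t j Y = ennreal (exp ((A - Sn (n0+1+j) Y)/2))" for j Y
  have tm: "t j \<in> borel_measurable P" for j unfolding t_def using Snm by measurable
  have pw: "stop_time (\<lambda>n. Wstat p b E \<theta> (Lam \<Theta> \<theta> \<epsilon>) n) A Y \<le> of_nat (n0+1) + (\<Sum>j. t j Y)" for Y
    unfolding t_def by (rule pw_upper) (rule ge)
  have rpow: "exp (A/2) * r ^ n0 \<le> 1"
  proof -
    have "r ^ n0 = exp (real n0 * ln r)" using r by (simp add: exp_of_nat_mult)
    also have "ln r = - c" unfolding c_def using r by (simp add: ln_div)
    finally have e: "r ^ n0 = exp (- (real n0 * c))" by simp
    have "exp (A/2) * r ^ n0 = exp (A/2 - real n0 * c)" unfolding e exp_add[symmetric] by simp
    also have "\<dots> \<le> exp 0"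
    proof -
      have "A / 2 \<le> real n0 * c" using n0(1) c by (simp add: field_simps)
      then show ?thesis by simp
    qed
    finally show ?thesis by simp
  qed
  have tint: "(\<integral>\<^sup>+ Y. t j Y \<partial>P) \<le> ennreal (r ^ Suc j)" for j
  proof -
    define n where "n = n0 + 1 + j"
    have "(\<integral>\<^sup>+ Y. t j Y \<partial>P) = (\<integral>\<^sup>+ Y. ennreal (exp (A/2)) * ennreal (exp ((-1/2) * (\<Sum>i\<in>{1..n}. ln (p (la (b i)) (Y i) / p (\<theta> (b i)) (Y i))))) \<partial>P)"
      unfolding t_def Sn_def n_def
      by (intro nn_integral_cong) (simp add: ennreal_mult'[symmetric] exp_add[symmetric] field_simps)
    also have "\<dots> = ennreal (exp (A/2)) * (\<integral>\<^sup>+ Y. ennreal (exp ((-1/2) * (\<Sum>i\<in>{1..n}. ln (p (la (b i)) (Y i) / p (\<theta> (b i)) (Y i))))) \<partial>P)"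
    proof -
      have mm: "(\<lambda>Y. ennreal (exp ((-1/2) * Sn n Y))) \<in> borel_measurable P" using Snm[of n] by measurable
      show ?thesis using mm unfolding Sn_def by (intro nn_integral_cmult) auto
    qed
    also have "(\<integral>\<^sup>+ Y. ennreal (exp ((-1/2) * (\<Sum>i\<in>{1..n}. ln (p (la (b i)) (Y i) / p (\<theta> (b i)) (Y i))))) \<partial>P)
        = (\<Prod>i\<in>{1..n}. \<integral>\<^sup>+ y. ennreal (exp ((-1/2) * ln (p (la (b i)) y / p (\<theta> (b i)) y))) \<partial>M i)"
      unfolding P_def using PM gm by (intro prod_exp_sum) auto
    also have "\<dots> \<le> (\<Prod>i\<in>{1..n}. ennreal r)"
    proof (intro prod_mono_ennreal)
      fix i assume i: "i \<in> {1..n}"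
      have "(\<integral>\<^sup>+ y. ennreal (exp ((-1/2) * ln (p (la (b i)) y / p (\<theta> (b i)) y))) \<partial>M i)
          = (\<integral>\<^sup>+ y. ennreal (exp (- ln (p (la (b i)) y / p (\<theta> (b i)) y) / 2)) \<partial>density \<mu> (\<lambda>y. ennreal (p (la (b i)) y)))"
        using Mi[of i] i by (simp add: field_simps)
      also have "\<dots> \<le> ennreal r" by (rule rho[OF bin lm])
      finally show "(\<integral>\<^sup>+ y. ennreal (exp ((-1/2) * ln (p (la (b i)) y / p (\<theta> (b i)) y))) \<partial>M i) \<le> ennreal r" .
    qed
    also have "\<dots> = ennreal (r ^ n)" using r by (simp add: ennreal_power)
    finally have "(\<integral>\<^sup>+ Y. t j Y \<partial>P) \<le> ennreal (exp (A/2)) * ennreal (r ^ n)"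
      by (simp add: mult_left_mono)
    also have "\<dots> = ennreal (exp (A/2) * r ^ n0 * r ^ Suc j)"
      unfolding n_def by (simp add: ennreal_mult'[symmetric] power_add field_simps)
    also have "\<dots> \<le> ennreal (1 * r ^ Suc j)"
      using rpow r by (intro ennreal_leI mult_right_mono) auto
    finally show ?thesis by simp
  qed
  have geo: "(\<Sum>j. ennreal (r ^ Suc j)) = ennreal (r / (1 - r))"
  proof -
    have "(\<lambda>j. r ^ Suc j) sums (r * (1 / (1 - r)))"
      using sums_mult[OF geometric_sums[of r], of r] r by simp
    then have s: "(\<lambda>j. r ^ Suc j) sums (r / (1 - r))" by simp
    have "(\<Sum>j. ennreal (r ^ Suc j)) = ennreal (\<Sum>j. r ^ Suc j)"
      using r s by (intro suminf_ennreal2) (auto simp: sums_summable)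
    then show ?thesis using s sums_unique by metis
  qed
  have "(\<integral>\<^sup>+ Y. stop_time (\<lambda>n. Wstat p b E \<theta> (Lam \<Theta> \<theta> \<epsilon>) n) A Y \<partial>P)
      \<le> (\<integral>\<^sup>+ Y. of_nat (n0+1) + (\<Sum>j. t j Y) \<partial>P)"
    by (intro nn_integral_mono pw)
  also have "\<dots> = (\<integral>\<^sup>+ Y. of_nat (n0+1) \<partial>P) + (\<integral>\<^sup>+ Y. (\<Sum>j. t j Y) \<partial>P)"
    using tm by (intro nn_integral_add) auto
  also have "(\<integral>\<^sup>+ Y. of_nat (n0+1) \<partial>P) = of_nat (n0+1)"
  proof -
    interpret prob_space P unfolding P_def using PM by (intro prob_space_PiM) auto
    show ?thesis by (simp add: emeasure_space_1)
  qed
  also have "(\<integral>\<^sup>+ Y. (\<Sum>j. t j Y) \<partial>P) = (\<Sum>j. \<integral>\<^sup>+ Y. t j Y \<partial>P)"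
    using tm by (intro nn_integral_suminf) auto
  also have "\<dots> \<le> (\<Sum>j. ennreal (r ^ Suc j))"
    using tint by (intro suminf_le) auto
  also have "of_nat (n0 + 1) + (\<Sum>j. ennreal (r ^ Suc j)) = ennreal (real (n0+1) + r / (1 - r))"
    unfolding geo using r by (simp add: ennreal_of_nat_eq_real_of_nat ennreal_plus[symmetric] del: ennreal_plus)
  also have "\<dots> \<le> ennreal (A / (2 * ln (1/r)) + 2 + 1 / (1 - r))"
  proof (intro ennreal_leI)
    have "r / (1 - r) \<le> 1 / (1 - r)" using r by (simp add: divide_right_mono)
    then show "real (n0 + 1) + r / (1 - r) \<le> A / (2 * ln (1 / r)) + 2 + 1 / (1 - r)"
      using n0(2) unfolding c_def by simp
  qed
  finally show ?thesis unfolding law b_def by simp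
qed

end



lemma finite_ennreal_lt1:
  assumes "finite R" "\<And>x. x \<in> R \<Longrightarrow> x < (1::ennreal)"
  shows "\<exists>r::real. 0 < r \<and> r < 1 \<and> (\<forall>x\<in>R. x \<le> ennreal r)"
proof (cases "R = {}")
  case True then show ?thesis by (intro exI[of _ "1/2"]) auto
next
  case False
  define m where "m = Max R"
  have mR: "m \<in> R" unfolding m_def using assms False by simp
  have m1: "m < 1" using assms(2)[OF mR] .
  then obtain m' where m': "m' \<ge> 0" "m = ennreal m'" by (cases m) auto
  have "m' < 1" using m1 m' by simp
  define r where "r = max (1/2) m'"
  have "x \<le> ennreal r" if "x \<in> R" for x
  proof -
    have "x \<le> m" unfolding m_def using assms that by simp
    also have "m \<le> ennreal r" unfolding m'(2) r_def by (intro ennreal_leI) simp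
    finally show ?thesis .
  qed
  moreover have "0 < r" "r < 1" unfolding r_def using \<open>m' < 1\<close> by auto
  ultimately show ?thesis by blast
qed

lemma A_bigo: "(\<lambda>x::real. 3 * ln x + K) \<in> O(ln)"
proof (intro bigoI[where c = "3 + \<bar>K\<bar>"])
  have "eventually (\<lambda>x::real. x \<ge> exp 1) at_top" by (rule eventually_ge_at_top)
  then show "eventually (\<lambda>x::real. norm (3 * ln x + K) \<le> (3 + \<bar>K\<bar>) * norm (ln x)) at_top"
  proof (rule eventually_mono)
    fix x :: real assume x: "x \<ge> exp 1"
    then have "x > 0" using exp_gt_zero[of 1] by linarith
    then have l: "ln x \<ge> 1" using x by (metis ln_exp ln_le_cancel_iff exp_gt_zero)
    have k: "\<bar>K\<bar> \<le> \<bar>K\<bar> * ln x" using mult_left_mono[OF l, of "\<bar>K\<bar>"] by simp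
    have "norm (3 * ln x + K) \<le> 3 * ln x + \<bar>K\<bar>" using l by simp
    also have "\<dots> \<le> (3 + \<bar>K\<bar>) * ln x" using k by (simp add: algebra_simps)
    finally show "norm (3 * ln x + K) \<le> (3 + \<bar>K\<bar>) * norm (ln x)" using l by simp
  qed
qed

theorem theorem2:
  fixes \<mu> :: "'a measure" and p :: "real \<Rightarrow> 'a \<Rightarrow> real" and \<Theta> :: "real set"
    and T E :: nat and N :: "nat \<Rightarrow> nat" and \<theta> :: "nat \<Rightarrow> real" and \<epsilon> :: real
  assumes dens_meas: "\<And>t. t \<in> \<Theta> \<Longrightarrow> p t \<in> borel_measurable \<mu>"
    and dens_nonneg: "\<And>t y. t \<in> \<Theta> \<Longrightarrow> y \<in> space \<mu> \<Longrightarrow> p t y \<ge> 0"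
    and dens_prob: "\<And>t. t \<in> \<Theta> \<Longrightarrow> prob_space (density \<mu> (\<lambda>y. ennreal (p t y)))"
    and KL_fin_pos: "\<And>t s. t \<in> \<Theta> \<Longrightarrow> s \<in> \<Theta> \<Longrightarrow> t \<noteq> s \<Longrightarrow>
        KL_finite (density \<mu> (\<lambda>y. ennreal (p t y))) (density \<mu> (\<lambda>y. ennreal (p s y)))
        \<and> KL (density \<mu> (\<lambda>y. ennreal (p t y))) (density \<mu> (\<lambda>y. ennreal (p s y))) > 0"
    and batches: "batches_ok T E N"
    and theta_in: "\<And>e. e \<in> {1..E} \<Longrightarrow> \<theta> e \<in> \<Theta>"
    and eps_pos: "\<epsilon> > 0"
    and Lam_finite: "\<And>e. e \<in> {1..E} \<Longrightarrow> finite (Lam \<Theta> \<theta> \<epsilon> e)"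
  shows "\<exists>A :: real \<Rightarrow> real. A \<in> O(ln) \<and> eventually (\<lambda>\<beta>. A \<beta> > 0) at_top \<and>
     (\<exists>f :: real \<Rightarrow> real. (f \<longlongrightarrow> 0) at_top \<and>
        eventually (\<lambda>\<beta>. ennreal (\<beta> * (1 + f \<beta>)) \<le>
          (\<integral>\<^sup>+ Y. stop_time (\<lambda>n. Wstat p (batch T E N) E \<theta> (Lam \<Theta> \<theta> \<epsilon>) n) (A \<beta>) Y
             \<partial>obs_law \<mu> p (batch T E N) \<theta> \<theta> None)) at_top) \<and>
     (\<exists>C > 0. \<forall>la. (\<forall>e \<in> {1..E}. la e \<in> Lam \<Theta> \<theta> \<epsilon> e) \<longrightarrow>
        (\<exists>g :: real \<Rightarrow> real. (g \<longlongrightarrow> 0) at_top \<and>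
          eventually (\<lambda>\<beta>.
            (\<integral>\<^sup>+ Y. stop_time (\<lambda>n. Wstat p (batch T E N) E \<theta> (Lam \<Theta> \<theta> \<epsilon>) n) (A \<beta>) Y
               \<partial>obs_law \<mu> p (batch T E N) \<theta> la (Some 1))
            \<le> ennreal (C * ln \<beta> * (1 + g \<beta>))) at_top))"
proof -
  note ctx = dens_meas dens_nonneg dens_prob KL_fin_pos batches theta_in eps_pos Lam_finite
  define L where "L = PiE {1..E} (Lam \<Theta> \<theta> \<epsilon>)"
  define cL where "cL = real (card L)"
  have cL0: "cL \<ge> 0" unfolding cL_def by simp
  define K where "K = ln (cL + 1) + \<bar>Sup ({}::real set)\<bar>"
  have K0: "K \<ge> 0" unfolding K_def using cL0 by simp
  define A where "A \<beta> = 3 * ln \<beta> + K" for \<beta> :: real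
  have Apos: "A \<beta> > 0" if "\<beta> \<ge> 2" for \<beta>
  proof -
    have "ln \<beta> > 0" using that by simp
    then show ?thesis unfolding A_def using K0 by simp
  qed
  have AO: "A \<in> O(ln)" unfolding A_def by (rule A_bigo)
  have ev2: "eventually (\<lambda>\<beta>::real. \<beta> \<ge> 2) at_top" by (rule eventually_ge_at_top)
  define f where "f \<beta> = (1 - 1/\<beta>)^2 - 1" for \<beta> :: real
  have f0: "(f \<longlongrightarrow> 0) at_top"
  proof -
    have "((\<lambda>\<beta>::real. (1 - 1/\<beta>)^2 - 1) \<longlongrightarrow> (1 - 0)^2 - 1) at_top"
      by (intro tendsto_intros tendsto_divide_0[OF tendsto_const] filterlim_ident) (rule filterlim_at_top_imp_at_infinity[OF filterlim_ident])
    then show ?thesis unfolding f_def by simp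
  qed
  have low: "ennreal (\<beta> * (1 + f \<beta>)) \<le>
          (\<integral>\<^sup>+ Y. stop_time (\<lambda>n. Wstat p (batch T E N) E \<theta> (Lam \<Theta> \<theta> \<epsilon>) n) (A \<beta>) Y
             \<partial>obs_law \<mu> p (batch T E N) \<theta> \<theta> None)" if b2: "\<beta> \<ge> 2" for \<beta>
  proof -
    define n where "n = nat \<lfloor>\<beta>\<rfloor>"
    have nr: "real n = real_of_int \<lfloor>\<beta>\<rfloor>" unfolding n_def using b2 by simp
    have n1: "\<beta> - 1 \<le> real n" "real n \<le> \<beta>" unfolding nr by linarith+
    have n1': "1 \<le> n" using n1 b2 by simp
    have SA: "Sup ({}::real set) \<le> A \<beta>"
    proof -
      have "ln \<beta> \<ge> 0" "ln (cL + 1) \<ge> 0" using b2 cL0 by simp_all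
      then show ?thesis unfolding A_def K_def by linarith
    qed
    have bpos: "\<beta> > 0" using b2 by simp
    have eA: "exp (- A \<beta>) \<le> 1 / (\<beta>^3 * (cL + 1))"
    proof -
      have "exp (- A \<beta>) = exp (- (3 * ln \<beta>)) * exp (- ln (cL + 1)) * exp (- \<bar>Sup ({}::real set)\<bar>)"
      proof -
        have "- A \<beta> = - (3 * ln \<beta>) + - ln (cL + 1) + - \<bar>Sup ({}::real set)\<bar>" unfolding A_def K_def by simp
        then show ?thesis by (simp only: exp_add)
      qed
      also have "exp (- (3 * ln \<beta>)) = 1 / \<beta>^3"
      proof -
        have "exp (real 3 * ln \<beta>) = exp (ln \<beta>) ^ 3" by (rule exp_of_nat_mult)
        then have "exp (3 * ln \<beta>) = \<beta> ^ 3" using bpos by simp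
        then show ?thesis by (simp add: exp_minus divide_inverse)
      qed
      also have "exp (- ln (cL + 1)) = 1 / (cL + 1)" using cL0 by (simp add: exp_minus divide_inverse)
      also have "exp (- \<bar>Sup ({}::real set)\<bar>) \<le> 1" by simp
      finally show ?thesis using bpos cL0 by (simp add: mult_left_le divide_simps)
    qed
    have q: "real n ^ 2 * cL * exp (- A \<beta>) \<le> 1 / \<beta>"
    proof -
      have "real n ^ 2 * cL * exp (- A \<beta>) \<le> \<beta> ^ 2 * cL * (1 / (\<beta>^3 * (cL + 1)))"
        using n1 cL0 eA by (intro mult_mono power_mono) auto
      also have "\<dots> = (cL / (cL + 1)) * (1 / \<beta>)"
      proof -
        have "\<beta>^3 = \<beta>^2 * \<beta>" by (simp add: power3_eq_cube power2_eq_square)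
        then have "\<beta> ^ 2 * cL * (1 / (\<beta>^3 * (cL + 1))) = (\<beta>^2 / \<beta>^2) * (cL / ((cL + 1) * \<beta>))"
          by (simp add: ac_simps)
        also have "\<beta>^2 / \<beta>^2 = 1" using bpos by simp
        finally show ?thesis by simp
      qed
      also have "\<dots> \<le> 1 * (1 / \<beta>)" using cL0 bpos by (intro mult_right_mono) auto
      finally show ?thesis by simp
    qed
    have "\<beta> * (1 + f \<beta>) = (\<beta> - 1) * (1 - 1/\<beta>)"
      unfolding f_def using bpos by (simp add: field_simps power2_eq_square)
    also have "\<dots> \<le> real n * (1 - real n ^ 2 * cL * exp (- A \<beta>))"
      using n1 q b2 by (intro mult_mono) (auto simp: field_simps)
    finally have "ennreal (\<beta> * (1 + f \<beta>)) \<le> ennreal (real n * (1 - real n ^ 2 * cL * exp (- A \<beta>)))"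
      by (rule ennreal_leI)
    also have "\<dots> \<le> (\<integral>\<^sup>+ Y. stop_time (\<lambda>n. Wstat p (batch T E N) E \<theta> (Lam \<Theta> \<theta> \<epsilon>) n) (A \<beta>) Y
             \<partial>obs_law \<mu> p (batch T E N) \<theta> \<theta> None)"
      using lower[OF ctx SA n1'] unfolding cL_def L_def .
    finally show ?thesis .
  qed
  define rho where "rho e l = (\<integral>\<^sup>+ y. ennreal (exp (- ln (p l y / p (\<theta> e) y) / 2)) \<partial>density \<mu> (\<lambda>y. ennreal (p l y)))" for e l
  define R where "R = (\<lambda>(e, l). rho e l) ` (SIGMA e:{1..E}. Lam \<Theta> \<theta> \<epsilon> e)"
  have finR: "finite R" unfolding R_def using Lam_finite by (intro finite_imageI finite_SigmaI) auto
  have Rlt: "x < 1" if xR: "x \<in> R" for x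
  proof -
    obtain z where z: "z \<in> (SIGMA e:{1..E}. Lam \<Theta> \<theta> \<epsilon> e)" "x = (\<lambda>(e, l). rho e l) z"
      using xR unfolding R_def by blast
    obtain e l where zel: "z = (e, l)" by (cases z)
    have el: "e \<in> {1..E}" "l \<in> Lam \<Theta> \<theta> \<epsilon> e" "x = rho e l" using z unfolding zel by auto
    have lT: "l \<in> \<Theta>" using Lam_sub[OF ctx el(2)] .
    have tT: "\<theta> e \<in> \<Theta>" using theta_in el(1) by simp
    have ne: "l \<noteq> \<theta> e" using Lam_ne[OF ctx el(1,2)] .
    show ?thesis unfolding el(3) rho_def
      by (rule hell_lt1[OF dens_meas dens_nonneg dens_prob tT lT ac_of[OF ctx lT tT ne] D_ne[OF ctx lT tT ne]])
  qed
  obtain r :: real where r: "0 < r" "r < 1" "\<forall>x\<in>R. x \<le> ennreal r"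
    using finite_ennreal_lt1[OF finR Rlt] by blast
  have rho_le: "rho e l \<le> ennreal r" if "e \<in> {1..E}" "l \<in> Lam \<Theta> \<theta> \<epsilon> e" for e l
    using r(3) that unfolding R_def by auto
  define c where "c = ln (1/r)"
  have c: "c > 0" unfolding c_def using r by simp
  define C where "C = 3 / (2 * c)"
  have C: "C > 0" unfolding C_def using c by simp
  define Q where "Q = K / (2 * c) + 2 + 1 / (1 - r)"
  define g where "g \<beta> = Q / C * inverse (ln \<beta>)" for \<beta> :: real
  have g0: "(g \<longlongrightarrow> 0) at_top"
  proof -
    have "((\<lambda>\<beta>::real. Q / C * inverse (ln \<beta>)) \<longlongrightarrow> Q / C * 0) at_top"
      by (intro tendsto_intros tendsto_inverse_0_at_top ln_at_top)
    then show ?thesis unfolding g_def by simp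
  qed
  have up: "\<exists>g :: real \<Rightarrow> real. (g \<longlongrightarrow> 0) at_top \<and>
          eventually (\<lambda>\<beta>.
            (\<integral>\<^sup>+ Y. stop_time (\<lambda>n. Wstat p (batch T E N) E \<theta> (Lam \<Theta> \<theta> \<epsilon>) n) (A \<beta>) Y
               \<partial>obs_law \<mu> p (batch T E N) \<theta> la (Some 1))
            \<le> ennreal (C * ln \<beta> * (1 + g \<beta>))) at_top"
    if la: "\<forall>e \<in> {1..E}. la e \<in> Lam \<Theta> \<theta> \<epsilon> e" for la
  proof (intro exI[of _ g] conjI g0)
    show "eventually (\<lambda>\<beta>.
            (\<integral>\<^sup>+ Y. stop_time (\<lambda>n. Wstat p (batch T E N) E \<theta> (Lam \<Theta> \<theta> \<epsilon>) n) (A \<beta>) Y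
               \<partial>obs_law \<mu> p (batch T E N) \<theta> la (Some 1))
            \<le> ennreal (C * ln \<beta> * (1 + g \<beta>))) at_top"
      using ev2
    proof (rule eventually_mono)
      fix \<beta> :: real assume b2: "\<beta> \<ge> 2"
      have lp: "ln \<beta> > 0" using b2 by simp
      have "(\<integral>\<^sup>+ Y. stop_time (\<lambda>n. Wstat p (batch T E N) E \<theta> (Lam \<Theta> \<theta> \<epsilon>) n) (A \<beta>) Y
               \<partial>obs_law \<mu> p (batch T E N) \<theta> la (Some 1))
          \<le> ennreal (A \<beta> / (2 * ln (1/r)) + 2 + 1 / (1 - r))"
        by (rule upper[OF ctx la r(1,2) _ Apos[OF b2]]) (use rho_le in \<open>auto simp: rho_def\<close>)
      also have "A \<beta> / (2 * ln (1/r)) + 2 + 1 / (1 - r) = C * ln \<beta> * (1 + g \<beta>)"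
        unfolding A_def C_def g_def Q_def c_def[symmetric] using c lp C
        by (simp add: field_simps)
      finally show "(\<integral>\<^sup>+ Y. stop_time (\<lambda>n. Wstat p (batch T E N) E \<theta> (Lam \<Theta> \<theta> \<epsilon>) n) (A \<beta>) Y
               \<partial>obs_law \<mu> p (batch T E N) \<theta> la (Some 1))
            \<le> ennreal (C * ln \<beta> * (1 + g \<beta>))" .
    qed
  qed
  show ?thesis
  proof (rule exI[of _ A], intro conjI AO)
    show "eventually (\<lambda>\<beta>. A \<beta> > 0) at_top" using ev2 by (rule eventually_mono) (rule Apos)
    show "\<exists>f :: real \<Rightarrow> real. (f \<longlongrightarrow> 0) at_top \<and>
        eventually (\<lambda>\<beta>. ennreal (\<beta> * (1 + f \<beta>)) \<le>
          (\<integral>\<^sup>+ Y. stop_time (\<lambda>n. Wstat p (batch T E N) E \<theta> (Lam \<Theta> \<theta> \<epsilon>) n) (A \<beta>) Y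
             \<partial>obs_law \<mu> p (batch T E N) \<theta> \<theta> None)) at_top"
    proof -
      have ev: "eventually (\<lambda>\<beta>. ennreal (\<beta> * (1 + f \<beta>)) \<le>
          (\<integral>\<^sup>+ Y. stop_time (\<lambda>n. Wstat p (batch T E N) E \<theta> (Lam \<Theta> \<theta> \<epsilon>) n) (A \<beta>) Y
             \<partial>obs_law \<mu> p (batch T E N) \<theta> \<theta> None)) at_top"
        using ev2 by (rule eventually_mono) (rule low)
      show ?thesis using f0 ev by blast
    qed
    show "\<exists>C > 0. \<forall>la. (\<forall>e \<in> {1..E}. la e \<in> Lam \<Theta> \<theta> \<epsilon> e) \<longrightarrow>
        (\<exists>g :: real \<Rightarrow> real. (g \<longlongrightarrow> 0) at_top \<and>
          eventually (\<lambda>\<beta>.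
            (\<integral>\<^sup>+ Y. stop_time (\<lambda>n. Wstat p (batch T E N) E \<theta> (Lam \<Theta> \<theta> \<epsilon>) n) (A \<beta>) Y
               \<partial>obs_law \<mu> p (batch T E N) \<theta> la (Some 1))
            \<le> ennreal (C * ln \<beta> * (1 + g \<beta>))) at_top)"
      using C up by blast
  qed
qed


end
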